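(* Let $(X,\tau)$ be a $T_0$ space and $\mathcal{F}$ a directed family of nonempty finite subsets of $X$. If $x\in U\in\tau_{SI_2}(X)$ and $\bigcap_{F\in\mathcal{F}}\uparrow F\subseteq\uparrow x$, then $F\subseteq U$ for some $F\in\mathcal{F}$.
   Context: For a $T_0$ space $(X,\tau)$, the specialization order is $y\le x$ iff $y\in\operatorname{cl}(\{x\})$; all order notions refer to it. For $A\subseteq X$: $\uparrow A=\{x: a\le x \text{ for some } a\in A\}$, $A^{\uparrow}$ is the set of upper bounds of $A$, $A^{\downarrow}$ the set of lower bounds, and $A^{\delta}=(A^{\uparrow})^{\downarrow}$. A nonempty $E\subseteq X$ is irreducible if whenever $E\subseteq B\cup C$ with $B,C$ closed, then $E\subseteq B$ or $E\subseteq C$. A nonempty family $\mathcal{G}$ of subsets of $X$ is directed if for $G_1,G_2\in\mathcal{G}$ there is $G\in\mathcal{G}$ with $G\subseteq\uparrow G_1\cap\uparrow G_2$. A set $U\subseteq X$ is weakly irreducibly open if $U\in\tau$ and for every irreducible $E\subseteq X$, $E^{\delta}\cap U\neq\emptyset$ implies $E\cap U\neq\emptyset$; these form the topology $\tau_{SI_2}(X)$. *)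

theory Defs
  imports "HOL-Analysis.Analysis"
begin

definition spec_le :: "'a topology \<Rightarrow> 'a \<Rightarrow> 'a \<Rightarrow> bool" where
  "spec_le X y x \<longleftrightarrow> x \<in> topspace X \<and> y \<in> X closure_of {x}"

definition upset :: "'a topology \<Rightarrow> 'a set \<Rightarrow> 'a set" where
  "upset X A = {x \<in> topspace X. \<exists>a\<in>A. spec_le X a x}"

definition upper_bounds :: "'a topology \<Rightarrow> 'a set \<Rightarrow> 'a set" where
  "upper_bounds X A = {x \<in> topspace X. \<forall>a\<in>A. spec_le X a x}"

definition lower_bounds :: "'a topology \<Rightarrow> 'a set \<Rightarrow> 'a set" where
  "lower_bounds X A = {x \<in> topspace X. \<forall>a\<in>A. spec_le X x a}"

definition delta_set :: "'a topology \<Rightarrow> 'a set \<Rightarrow> 'a set" where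
  "delta_set X A = lower_bounds X (upper_bounds X A)"

definition irreducible_set :: "'a topology \<Rightarrow> 'a set \<Rightarrow> bool" where
  "irreducible_set X E \<longleftrightarrow> E \<noteq> {} \<and> E \<subseteq> topspace X \<and>
     (\<forall>B C. closedin X B \<longrightarrow> closedin X C \<longrightarrow> E \<subseteq> B \<union> C \<longrightarrow> E \<subseteq> B \<or> E \<subseteq> C)"

definition directed_family :: "'a topology \<Rightarrow> 'a set set \<Rightarrow> bool" where
  "directed_family X \<G> \<longleftrightarrow> \<G> \<noteq> {} \<and>
     (\<forall>G1\<in>\<G>. \<forall>G2\<in>\<G>. \<exists>G\<in>\<G>. G \<subseteq> upset X G1 \<inter> upset X G2)"

definition weakly_irreducibly_open :: "'a topology \<Rightarrow> 'a set \<Rightarrow> bool" where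
  "weakly_irreducibly_open X U \<longleftrightarrow> openin X U \<and>
     (\<forall>E. irreducible_set X E \<longrightarrow> delta_set X E \<inter> U \<noteq> {} \<longrightarrow> E \<inter> U \<noteq> {})"

end

theory Submission
  imports Defs
begin

theorem proposition4p1:
  fixes X :: "'a topology" and \<F> :: "'a set set" and U :: "'a set" and x :: 'a
  assumes "t0_space X"
    and "directed_family X \<F>"
    and "\<forall>F\<in>\<F>. finite F \<and> F \<noteq> {} \<and> F \<subseteq> topspace X"
    and "x \<in> U"
    and "weakly_irreducibly_open X U"
    and "(\<Inter>F\<in>\<F>. upset X F) \<subseteq> upset X {x}"
  shows "\<exists>F\<in>\<F>. F \<subseteq> U"
proof (rule ccontr)
  assume nc: "\<not> (\<exists>F\<in>\<F>. F \<subseteq> U)"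
  have Uo: "openin X U" using assms(5) unfolding weakly_irreducibly_open_def by blast
  have Fne: "\<F> \<noteq> {}" and dir: "\<And>G1 G2. G1 \<in> \<F> \<Longrightarrow> G2 \<in> \<F> \<Longrightarrow> \<exists>G\<in>\<F>. G \<subseteq> upset X G1 \<inter> upset X G2"
    using assms(2) unfolding directed_family_def by blast+
  define S where "S = {V. openin X V \<and> (\<forall>F\<in>\<F>. (topspace X - V) \<inter> (F - U) \<noteq> {})}"
  have "\<forall>C\<in>chains S. \<Union>C \<in> S"
  proof
    fix C assume C: "C \<in> chains S"
    hence CS: "C \<subseteq> S" and ch: "subset.chain S C" using chains_alt_def[of S] chains_def[of S] by auto
    have "openin X (\<Union>C)" using CS by (auto simp: S_def)
    moreover have "(topspace X - \<Union>C) \<inter> (F - U) \<noteq> {}" if F: "F \<in> \<F>" for F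
    proof
      assume e: "(topspace X - \<Union>C) \<inter> (F - U) = {}"
      have fin: "finite (F - U)" using assms(3) F by auto
      have ne: "F - U \<noteq> {}" using nc F by auto
      have sub: "F - U \<subseteq> \<Union>C" using e assms(3) F by auto
      have "C \<noteq> {}" using sub ne by auto
      then obtain B where B: "B \<in> C" "F - U \<subseteq> B"
        using finite_subset_Union_chain[OF fin sub _ ch] by blast
      have "(topspace X - B) \<inter> (F - U) \<noteq> {}" using B CS F by (auto simp: S_def)
      thus False using B by auto
    qed
    ultimately show "\<Union>C \<in> S" by (auto simp: S_def)
  qed
  then obtain M where MS: "M \<in> S" and Mmax: "\<And>V. V \<in> S \<Longrightarrow> M \<subseteq> V \<Longrightarrow> V = M"
    using Zorn_Lemma[of S] by blast
  have Mo: "openin X M" and Mmeet: "\<And>F. F \<in> \<F> \<Longrightarrow> (topspace X - M) \<inter> (F - U) \<noteq> {}"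
    using MS by (auto simp: S_def)
  have "M \<union> U \<in> S" using Mo Uo Mmeet by (auto simp: S_def)
  hence UM: "U \<subseteq> M" using Mmax[of "M \<union> U"] by blast
  define A where "A = topspace X - M"
  have Acl: "closedin X A" using Mo by (simp add: A_def closedin_diff)
  have AU: "A \<inter> U = {}" using UM by (auto simp: A_def)
  have Ameet: "\<And>F. F \<in> \<F> \<Longrightarrow> A \<inter> (F - U) \<noteq> {}" using Mmeet by (simp add: A_def)
  have key: "\<exists>F\<in>\<F>. A \<inter> B \<inter> (F - U) = {}" if B: "closedin X B" and nAB: "\<not> A \<subseteq> B" for B
  proof (rule ccontr)
    assume h: "\<not> (\<exists>F\<in>\<F>. A \<inter> B \<inter> (F - U) = {})"
    have "M \<union> (topspace X - B) \<in> S"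
    proof -
      have "openin X (M \<union> (topspace X - B))" using Mo B by (auto simp: closedin_def)
      moreover have "\<forall>F\<in>\<F>. (topspace X - (M \<union> (topspace X - B))) \<inter> (F - U) \<noteq> {}"
        using h by (auto simp: A_def)
      ultimately show ?thesis by (simp add: S_def)
    qed
    hence "M \<union> (topspace X - B) = M" using Mmax by blast
    thus False using nAB by (auto simp: A_def)
  qed
  have irr: "irreducible_set X A"
    unfolding irreducible_set_def
  proof (intro conjI allI impI)
    show "A \<noteq> {}" using Fne Ameet by blast
    show "A \<subseteq> topspace X" by (auto simp: A_def)
  next
    fix B C assume B: "closedin X B" and C: "closedin X C" and ABC: "A \<subseteq> B \<union> C"
    show "A \<subseteq> B \<or> A \<subseteq> C"
    proof (rule ccontr)
      assume "\<not> (A \<subseteq> B \<or> A \<subseteq> C)"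
      then obtain F1 F2 where F1: "F1 \<in> \<F>" "A \<inter> B \<inter> (F1 - U) = {}"
        and F2: "F2 \<in> \<F>" "A \<inter> C \<inter> (F2 - U) = {}"
        using key[OF B] key[OF C] by blast
      obtain G where G: "G \<in> \<F>" "G \<subseteq> upset X F1 \<inter> upset X F2" using dir[OF F1(1) F2(1)] by blast
      obtain g where g: "g \<in> A" "g \<in> G" "g \<notin> U" using Ameet[OF G(1)] by blast
      have step: "False" if D: "closedin X D" "g \<in> D" "A \<inter> D \<inter> (F - U) = {}" "g \<in> upset X F" for D F
      proof -
        obtain f where f: "f \<in> F" "spec_le X f g" using D(4) by (auto simp: upset_def)
        have cl: "X closure_of {g} \<subseteq> A \<inter> D"
          using closure_of_minimal[of "{g}" "A \<inter> D" X] D g Acl by auto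
        have fc: "f \<in> X closure_of {g}" using f by (simp add: spec_le_def)
        have "f \<notin> U"
        proof
          assume "f \<in> U"
          then have "U \<inter> {g} \<noteq> {}" using fc Uo by (auto simp: closure_of_def)
          thus False using g by auto
        qed
        thus False using D(3) cl fc f by auto
      qed
      have "g \<in> B \<or> g \<in> C" using ABC g by auto
      thus False using step[OF B _ F1(2)] step[OF C _ F2(2)] G g by auto
    qed
  qed
  have "x \<in> delta_set X A"
    unfolding delta_set_def lower_bounds_def
  proof (intro CollectI conjI ballI)
    show "x \<in> topspace X" using Uo assms(4) openin_subset by blast
  next
    fix u assume u: "u \<in> upper_bounds X A"
    have "u \<in> (\<Inter>F\<in>\<F>. upset X F)"
    proof
      fix F assume F: "F \<in> \<F>"
      then obtain a where "a \<in> A" "a \<in> F" using Ameet by blast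
      thus "u \<in> upset X F" using u by (auto simp: upper_bounds_def upset_def)
    qed
    hence "u \<in> upset X {x}" using assms(6) by blast
    thus "spec_le X x u" by (auto simp: upset_def)
  qed
  hence "delta_set X A \<inter> U \<noteq> {}" using assms(4) by blast
  hence "A \<inter> U \<noteq> {}" using assms(5) irr unfolding weakly_irreducibly_open_def by blast
  thus False using AU by blast
qed

end
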